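(* Every separable, incomplete real normed space $X$ contains a bounded overcomplete sequence that is not relatively (norm) compact in $X$.
   Context: A sequence $(g_k)_{k<\omega}$ in a normed space $X$ is overcomplete if every subsequence of it is linearly dense in $X$, i.e. the closed linear span of every subsequence is $X$. *)

theory Defs
  imports "HOL-Analysis.Analysis"
begin

definition linearly_dense :: "'a::real_normed_vector set \<Rightarrow> bool" where
  "linearly_dense S \<longleftrightarrow> closure (span S) = UNIV"

definition overcomplete :: "(nat \<Rightarrow> 'a::real_normed_vector) \<Rightarrow> bool" where
  "overcomplete g \<longleftrightarrow> (\<forall>r::nat \<Rightarrow> nat. strict_mono r \<longrightarrow> linearly_dense (range (g \<circ> r)))"

end

theory Submission
  imports Defs
begin


lemma subspace_closure_gen:
  fixes T :: "'a::real_normed_vector set"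
  assumes "subspace T"
  shows "subspace (closure T)"
  unfolding subspace_def
proof (intro conjI ballI allI)
  show "0 \<in> closure T" using assms closure_subset subspace_0 by blast
next
  fix x y assume "x \<in> closure T" "y \<in> closure T"
  then obtain f h where f: "\<forall>n. f n \<in> T" "f \<longlonglongrightarrow> x" and h: "\<forall>n. h n \<in> T" "h \<longlonglongrightarrow> y"
    unfolding closure_sequential by blast
  have "\<forall>n. f n + h n \<in> T" using f h assms subspace_add by blast
  moreover have "(\<lambda>n. f n + h n) \<longlonglongrightarrow> x + y" using f h tendsto_add by blast
  ultimately show "x + y \<in> closure T" unfolding closure_sequential
    by (intro exI[where x="\<lambda>n. f n + h n"]) simp
next
  fix c :: real and x assume "x \<in> closure T"
  then obtain f where f: "\<forall>n. f n \<in> T" "f \<longlonglongrightarrow> x"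
    unfolding closure_sequential by blast
  have "\<forall>n. c *\<^sub>R f n \<in> T" using f assms subspace_scale by blast
  moreover have "(\<lambda>n. c *\<^sub>R f n) \<longlonglongrightarrow> c *\<^sub>R x" using f tendsto_scaleR tendsto_const by blast
  ultimately show "c *\<^sub>R x \<in> closure T" unfolding closure_sequential
    by (intro exI[where x="\<lambda>n. c *\<^sub>R f n"]) simp
qed

lemma geo_aux:
  fixes t :: real
  assumes "0 \<le> t" "t \<le> 1/2" "p \<le> q"
  shows "(\<Sum>i\<in>{p..<q}. t ^ Suc i) \<le> 2 * (t ^ Suc p - t ^ Suc q)"
  using assms(3)
proof (induction q)
  case 0 then show ?case by simp
next
  case (Suc q)
  show ?case
  proof (cases "p = Suc q")
    case True then show ?thesis by simp
  next
    case False
    then have pq: "p \<le> q" using Suc.prems by simp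
    have "(\<Sum>i\<in>{p..<Suc q}. t ^ Suc i) = (\<Sum>i\<in>{p..<q}. t ^ Suc i) + t ^ Suc q"
      using pq by simp
    also have "\<dots> \<le> 2 * (t ^ Suc p - t ^ Suc q) + t ^ Suc q" using Suc.IH pq by simp
    also have "\<dots> \<le> 2 * (t ^ Suc p - t ^ Suc (Suc q))"
    proof -
      have "(2 * t) * t ^ Suc q \<le> 1 * t ^ Suc q"
        using assms(1,2) by (intro mult_right_mono) auto
      then have "2 * t ^ Suc (Suc q) \<le> t ^ Suc q" by (simp add: mult.assoc)
      then show ?thesis by simp
    qed
    finally show ?thesis .
  qed
qed

lemma geo:
  fixes t :: real
  assumes "0 \<le> t" "t \<le> 1/2"
  shows "(\<Sum>i\<in>{p..<q}. t ^ Suc i) \<le> 2 * t ^ Suc p"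
proof (cases "p \<le> q")
  case True
  have "0 \<le> t ^ Suc q" using assms by simp
  then have "2 * (t ^ Suc p - t ^ Suc q) \<le> 2 * t ^ Suc p" by simp
  then show ?thesis using geo_aux[OF assms True] by (rule order_trans[rotated])
next
  case False then show ?thesis using assms by simp
qed

lemma norm_wsum:
  fixes a :: "nat \<Rightarrow> 'a::real_normed_vector"
  assumes "0 \<le> t" "\<forall>i. norm (a i) \<le> 1"
  shows "norm (\<Sum>i\<in>A. t ^ Suc i *\<^sub>R a i) \<le> (\<Sum>i\<in>A. t ^ Suc i)"
proof -
  have "norm (\<Sum>i\<in>A. t ^ Suc i *\<^sub>R a i) \<le> (\<Sum>i\<in>A. norm (t ^ Suc i *\<^sub>R a i))"
    by (rule norm_sum)
  also have "\<dots> \<le> (\<Sum>i\<in>A. t ^ Suc i)"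
  proof (rule sum_mono)
    fix i
    have "norm (t ^ Suc i *\<^sub>R a i) = t ^ Suc i * norm (a i)" using assms by simp
    also have "\<dots> \<le> t ^ Suc i * 1" using assms by (intro mult_left_mono) auto
    finally show "norm (t ^ Suc i *\<^sub>R a i) \<le> t ^ Suc i" by simp
  qed
  finally show ?thesis .
qed

lemma split3:
  assumes "k < n"
  shows "(\<Sum>i<n. f i) = (\<Sum>i<k. f i) + f k + (\<Sum>i\<in>{Suc k..<n}. f i)"
proof -
  have "(\<Sum>i<n. f i) = (\<Sum>i\<in>{0..<k}. f i) + (\<Sum>i\<in>{k..<n}. f i)"
    using assms by (simp add: lessThan_atLeast0 sum.atLeastLessThan_concat)
  also have "(\<Sum>i\<in>{k..<n}. f i) = f k + (\<Sum>i\<in>{Suc k..<n}. f i)"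
    using assms by (simp add: sum.atLeast_Suc_lessThan)
  finally show ?thesis by (simp add: lessThan_atLeast0 add.assoc)
qed

lemma split2:
  assumes "(k::nat) \<le> n"
  shows "(\<Sum>i<n. f i) = (\<Sum>i<k. f i) + (\<Sum>i\<in>{k..<n}. f i)"
proof -
  have "(\<Sum>i<n. f i) = (\<Sum>i\<in>{0..<k}. f i) + (\<Sum>i\<in>{k..<n}. f i)"
    using assms by (simp add: lessThan_atLeast0 sum.atLeastLessThan_concat)
  then show ?thesis by (simp add: lessThan_atLeast0)
qed


lemma key:
  fixes c a :: "nat \<Rightarrow> 'a::real_normed_vector" and t :: "nat \<Rightarrow> real"
    and r :: "nat \<Rightarrow> nat"
  assumes tpos: "\<And>n. 0 < t n" and thalf: "\<And>n. t n \<le> 1/2" and tlim: "t \<longlonglongrightarrow> 0"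
    and a: "\<forall>i. norm (a i) \<le> 1"
    and c: "\<And>n m. n \<le> m \<Longrightarrow> norm (c n - c m) \<le> t n ^ (n+2)"
    and r: "strict_mono r"
    and g_def: "g = (\<lambda>n. c n + (\<Sum>i<n. t n ^ Suc i *\<^sub>R a i))"
  shows "a k \<in> closure (span (range (g \<circ> r)))"
proof -
  define V where "V = closure (span (range (g \<circ> r)))"
  have subV: "subspace V" unfolding V_def by (rule subspace_closure_gen[OF subspace_span])
  have clV: "closed V" unfolding V_def by simp
  have gV: "g (r j) \<in> V" for j
    unfolding V_def using closure_subset span_base[of "g (r j)" "range (g \<circ> r)"] by auto
  show ?thesis unfolding V_def[symmetric]
  proof (induction k rule: less_induct)
    case (less k)
    have sumV: "(\<Sum>i<k. s ^ Suc i *\<^sub>R a i) \<in> V" for s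
      using less subV by (intro subspace_sum subspace_scale) auto
    have tr: "(t \<circ> r) \<longlonglongrightarrow> 0" using LIMSEQ_subseq_LIMSEQ[OF tlim r] .
    show "a k \<in> V"
      unfolding closed_approachable[OF clV, symmetric]
    proof (intro allI impI)
      fix e :: real assume e: "e > 0"
      have "\<forall>\<^sub>F N in sequentially. (t \<circ> r) N < e/6"
        using order_tendstoD(2)[OF tr, of "e/6"] e by (simp add: o_def)
      then obtain N1 where N1: "\<And>N. N \<ge> N1 \<Longrightarrow> t (r N) < e/6"
        unfolding eventually_sequentially by auto
      define j where "j = max N1 (Suc k)"
      define n where "n = r j"
      have kn: "k < n" using seq_suble[OF r, of j] unfolding n_def j_def by simp
      have tn: "t n < e/6" using N1 unfolding n_def j_def by simp
      define \<delta> where "\<delta> = min 1 (e/6)"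
      have d0: "0 < \<delta>" "\<delta> \<le> 1" "\<delta> \<le> e/6" using e unfolding \<delta>_def by auto
      have "0 < t n * \<delta>" using tpos d0 by simp
      then have "\<forall>\<^sub>F M in sequentially. (t \<circ> r) M < t n * \<delta>"
        using order_tendstoD(2)[OF tr, of "t n * \<delta>"] by (simp add: o_def)
      then obtain M1 where M1: "\<And>M. M \<ge> M1 \<Longrightarrow> t (r M) < t n * \<delta>"
        unfolding eventually_sequentially by auto
      define M where "M = max M1 (Suc j)"
      define m where "m = r M"
      have nm: "n < m" unfolding n_def m_def M_def using r by (simp add: strict_mono_less)
      have tm: "t m < t n * \<delta>" using M1 unfolding m_def M_def by simp
      define T where "T = t n ^ Suc k"
      have T0: "0 < T" unfolding T_def using tpos by simp
      define w where "w = g n - g m - (\<Sum>i<k. t n ^ Suc i *\<^sub>R a i) + (\<Sum>i<k. t m ^ Suc i *\<^sub>R a i)"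
      have wV: "w \<in> V" unfolding w_def n_def m_def
        using gV sumV subV by (intro subspace_add subspace_diff) auto
      define S1 where "S1 = (\<Sum>i\<in>{Suc k..<n}. t n ^ Suc i *\<^sub>R a i)"
      define S2 where "S2 = (\<Sum>i\<in>{k..<m}. t m ^ Suc i *\<^sub>R a i)"
      have eq: "w - T *\<^sub>R a k = (c n - c m) + S1 - S2"
        unfolding w_def g_def S1_def S2_def T_def
        using split3[of k n "\<lambda>i. t n ^ Suc i *\<^sub>R a i"] split2[of k m "\<lambda>i. t m ^ Suc i *\<^sub>R a i"] kn nm
        by (simp add: algebra_simps)
      have tn0: "0 \<le> t n" "t n \<le> 1" using tpos[of n] thalf[of n] by auto
      have b1: "norm (c n - c m) \<le> T * t n"
      proof -
        have "norm (c n - c m) \<le> t n ^ (n+2)" using c nm by simp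
        also have "\<dots> \<le> t n ^ (Suc (Suc k))"
          using tn0 kn by (intro power_decreasing) auto
        finally show ?thesis unfolding T_def by (simp add: mult.commute)
      qed
      have b2: "norm S1 \<le> 2 * T * t n"
      proof -
        have "norm S1 \<le> (\<Sum>i\<in>{Suc k..<n}. t n ^ Suc i)"
          unfolding S1_def using norm_wsum tn0 a by blast
        also have "\<dots> \<le> 2 * t n ^ Suc (Suc k)" using geo[of "t n" "Suc k" n] tpos[of n] thalf[of n] by (simp add: less_imp_le)
        finally show ?thesis unfolding T_def by (simp add: mult.commute)
      qed
      have b3: "norm S2 \<le> 2 * T * \<delta>"
      proof -
        have tm0: "0 \<le> t m" using tpos[of m] by simp
        have "norm S2 \<le> (\<Sum>i\<in>{k..<m}. t m ^ Suc i)"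
          unfolding S2_def using norm_wsum tm0 a by blast
        also have "\<dots> \<le> 2 * t m ^ Suc k" using geo[of "t m" k m] tpos[of m] thalf[of m] by (simp add: less_imp_le)
        also have "t m ^ Suc k \<le> (t n * \<delta>) ^ Suc k"
          using tm tm0 by (intro power_mono) auto
        also have "(t n * \<delta>) ^ Suc k = T * \<delta> ^ Suc k" unfolding T_def by (simp add: power_mult_distrib)
        also have "\<delta> ^ Suc k \<le> \<delta>"
        proof -
          have "\<delta> ^ k \<le> 1" using d0 by (simp add: power_le_one)
          then have "\<delta> * \<delta> ^ k \<le> \<delta> * 1" using d0 by (intro mult_left_mono) auto
          then show ?thesis by simp
        qed
        finally show ?thesis using T0 by (simp add: mult_left_mono)
      qed
      have "norm (w - T *\<^sub>R a k) \<le> norm (c n - c m) + norm S1 + norm S2"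
        unfolding eq using norm_triangle_ineq4[of "(c n - c m) + S1" S2] norm_triangle_ineq[of "c n - c m" S1]
        by linarith
      also have "\<dots> \<le> T * (3 * t n + 2 * \<delta>)" using b1 b2 b3 by (simp add: algebra_simps)
      also have "\<dots> < T * e"
        using T0 tn d0 by (intro mult_strict_left_mono) auto
      finally have wb: "norm (w - T *\<^sub>R a k) < T * e" .
      define y where "y = (1/T) *\<^sub>R w"
      have yV: "y \<in> V" unfolding y_def using wV subV subspace_scale by blast
      have "y - a k = (1/T) *\<^sub>R (w - T *\<^sub>R a k)"
        unfolding y_def using T0 by (simp add: algebra_simps)
      then have "dist y (a k) = norm (w - T *\<^sub>R a k) / T"
        unfolding dist_norm using T0 by simp
      also have "\<dots> < e" using wb T0 by (simp add: divide_less_eq mult.commute)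
      finally show "\<exists>y\<in>V. dist y (a k) < e" using yV by blast
    qed
  qed
qed


lemma fast_subseq:
  fixes X :: "nat \<Rightarrow> 'a::real_normed_vector"
    and e :: "nat \<Rightarrow> real"
  assumes X: "Cauchy X" and e: "\<And>n. e n > 0"
  shows "\<exists>r. strict_mono r \<and> (\<forall>n m. n \<le> m \<longrightarrow> norm (X (r n) - X (r m)) \<le> e n)"
proof -
  have "\<forall>n. \<exists>N. \<forall>p\<ge>N. \<forall>q\<ge>N. norm (X p - X q) < e n"
    using X e unfolding Cauchy_iff by blast
  then obtain Nf where Nf: "\<And>n p q. p \<ge> Nf n \<Longrightarrow> q \<ge> Nf n \<Longrightarrow> norm (X p - X q) < e n"
    by metis
  define r where "r = rec_nat (Nf 0) (\<lambda>n rn. max (Nf (Suc n)) (Suc rn))"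
  have r0: "r 0 = Nf 0" and rS: "r (Suc n) = max (Nf (Suc n)) (Suc (r n))" for n
    unfolding r_def by simp_all
  have sm: "strict_mono r" unfolding strict_mono_Suc_iff using rS by (simp add: less_max_iff_disj)
  have rN: "r n \<ge> Nf n" for n by (cases n) (simp_all add: r0 rS)
  show ?thesis
  proof (intro exI conjI allI impI)
    show "strict_mono r" by (rule sm)
    fix n m :: nat assume "n \<le> m"
    then have "r n \<le> r m" using sm by (simp add: strict_mono_less_eq)
    then show "norm (X (r n) - X (r m)) \<le> e n"
      using Nf[of n "r n" "r m"] rN[of n] by simp
  qed
qed

theorem theorem5p2:
  assumes "separable_space (euclidean :: 'a::real_normed_vector topology)"
    and "\<not> complete (UNIV :: 'a set)"
  shows "\<exists>g :: nat \<Rightarrow> 'a. bounded (range g) \<and> overcomplete g \<and> \<not> compact (closure (range g))"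
proof -
  obtain D :: "'a set" where Dc: "countable D" and Dd: "closure D = UNIV"
    using assms(1) unfolding separable_space_def euclidean_closure_of by auto
  have Dne: "D \<noteq> {}" using Dd by auto
  define d where "d = from_nat_into D"
  have rd: "range d = D" unfolding d_def using range_from_nat_into[OF Dne Dc] .
  define a where "a = (\<lambda>i. (1 / (1 + norm (d i))) *\<^sub>R d i)"
  have anorm: "\<forall>i. norm (a i) \<le> 1"
  proof
    fix i
    have p: "0 < 1 + norm (d i)" by (simp add: add_pos_nonneg)
    have "norm (a i) = norm (d i) / (1 + norm (d i))" unfolding a_def using p by simp
    also have "\<dots> \<le> 1" using p by simp
    finally show "norm (a i) \<le> 1" .
  qed
  have Dspan: "D \<subseteq> span (range a)"
  proof
    fix x assume "x \<in> D"
    then obtain i where x: "x = d i" using rd by auto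
    have p: "0 < 1 + norm (d i)" by (simp add: add_pos_nonneg)
    have "x = (1 + norm (d i)) *\<^sub>R a i" unfolding x a_def using p by simp
    then show "x \<in> span (range a)" by (simp add: span_base span_scale)
  qed
  obtain X :: "nat \<Rightarrow> 'a" where XC: "Cauchy X" and Xnc: "\<And>l. \<not> X \<longlonglongrightarrow> l"
    using assms(2) unfolding complete_def by auto
  define t :: "nat \<Rightarrow> real" where "t = (\<lambda>n. (1/2) ^ Suc n)"
  have tpos: "\<And>n. 0 < t n" unfolding t_def by simp
  have thalf: "\<And>n. t n \<le> 1/2"
  proof -
    fix n
    have "(1/2::real) ^ Suc n \<le> (1/2) ^ 1" by (intro power_decreasing) auto
    then show "t n \<le> 1/2" unfolding t_def by simp
  qed
  have tlim: "t \<longlonglongrightarrow> 0"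
  proof -
    have "(\<lambda>n. (1/2::real) ^ n) \<longlonglongrightarrow> 0" by (rule LIMSEQ_realpow_zero) auto
    then show ?thesis unfolding t_def by (rule LIMSEQ_Suc)
  qed
  obtain r0 where r0: "strict_mono r0"
    and r0c: "\<And>n m. n \<le> m \<Longrightarrow> norm (X (r0 n) - X (r0 m)) \<le> t n ^ (n+2)"
    using fast_subseq[OF XC, of "\<lambda>n. t n ^ (n+2)"] tpos by auto
  define c where "c = X \<circ> r0"
  have cC: "Cauchy c" unfolding c_def using Cauchy_subseq_Cauchy[OF XC r0] .
  have cnc: "\<not> c \<longlonglongrightarrow> l" for l
    using Cauchy_converges_subseq[OF XC r0] Xnc unfolding c_def by blast
  have cb: "\<And>n m. n \<le> m \<Longrightarrow> norm (c n - c m) \<le> t n ^ (n+2)"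
    unfolding c_def using r0c by simp
  define h where "h = (\<lambda>n. (\<Sum>i<n. t n ^ Suc i *\<^sub>R a i))"
  define g where "g = (\<lambda>n. c n + (\<Sum>i<n. t n ^ Suc i *\<^sub>R a i))"
  have hb: "norm (h n) \<le> 2 * t n" for n
  proof -
    have "norm (h n) \<le> (\<Sum>i<n. t n ^ Suc i)"
      unfolding h_def using norm_wsum[of "t n" a "{..<n}"] tpos[of n] anorm by simp
    also have "\<dots> = (\<Sum>i\<in>{0..<n}. t n ^ Suc i)" by (simp add: lessThan_atLeast0)
    also have "\<dots> \<le> 2 * t n ^ Suc 0" using geo[of "t n" 0 n] tpos[of n] thalf[of n] by simp
    finally show ?thesis by simp
  qed
  have gch: "g = (\<lambda>n. c n + h n)" unfolding g_def h_def by simp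
  show ?thesis
  proof (intro exI[of _ g] conjI)
    show "bounded (range g)"
    proof -
      obtain B where B: "\<And>x. x \<in> range c \<Longrightarrow> norm x \<le> B"
        using cauchy_imp_bounded[OF cC] unfolding bounded_iff by blast
      have "norm (g n) \<le> B + 1" for n
      proof -
        have "norm (g n) \<le> norm (c n) + norm (h n)" unfolding gch by (simp add: norm_triangle_ineq)
        moreover have "norm (c n) \<le> B" using B by simp
        moreover have "2 * t n \<le> 1" using thalf[of n] by simp
        ultimately show ?thesis using hb[of n] by linarith
      qed
      then show ?thesis unfolding bounded_iff by blast
    qed
    show "overcomplete g"
      unfolding overcomplete_def linearly_dense_def
    proof (intro allI impI)
      fix r :: "nat \<Rightarrow> nat" assume r: "strict_mono r"
      define V where "V = closure (span (range (g \<circ> r)))"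
      have aV: "range a \<subseteq> V"
        unfolding V_def using key[OF tpos thalf tlim anorm cb r g_def] by blast
      have subV: "subspace V" unfolding V_def by (rule subspace_closure_gen[OF subspace_span])
      have "span (range a) \<subseteq> V" using span_minimal[OF aV subV] .
      then have "D \<subseteq> V" using Dspan by blast
      then have "closure D \<subseteq> V" unfolding V_def by (intro closure_minimal) auto
      then show "closure (span (range (g \<circ> r))) = UNIV" using Dd unfolding V_def by blast
    qed
    show "\<not> compact (closure (range g))"
    proof
      assume "compact (closure (range g))"
      then have "seq_compact (closure (range g))" by (rule compact_imp_seq_compact)
      moreover have "\<forall>n. g n \<in> closure (range g)" using closure_subset[of "range g"] by auto
      ultimately obtain l r where r: "strict_mono r" and gl: "(g \<circ> r) \<longlonglongrightarrow> l"
        by (metis seq_compactE)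
      have t2: "(\<lambda>n. 2 * t n) \<longlonglongrightarrow> 0" using tendsto_mult_right_zero[OF tlim] by simp
      have ev: "\<forall>\<^sub>F n in sequentially. norm (h n) \<le> 2 * t n"
        by (intro always_eventually allI hb)
      have "h \<longlonglongrightarrow> 0" by (rule Lim_null_comparison[OF ev t2])
      then have hl: "(h \<circ> r) \<longlonglongrightarrow> 0" by (rule LIMSEQ_subseq_LIMSEQ[OF _ r])
      have "(\<lambda>n. (g \<circ> r) n - (h \<circ> r) n) \<longlonglongrightarrow> l - 0" using tendsto_diff[OF gl hl] .
      moreover have "(\<lambda>n. (g \<circ> r) n - (h \<circ> r) n) = c \<circ> r" unfolding gch by (simp add: o_def)
      ultimately have "(c \<circ> r) \<longlonglongrightarrow> l" by simp
      then have "c \<longlonglongrightarrow> l" by (rule Cauchy_converges_subseq[OF cC r])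
      then show False using cnc[of l] by simp
    qed
  qed
qed

end
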